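(* For every $n\ge 1$, every labeled and every unlabeled tabletop rearrangement instance with $n$ objects has $\mathrm{MRB}\le n-1$; and for every $n\ge1$ there exists an instance whose $n$ objects are congruent convex objects (thin rectangles) such that its unlabeled $\mathrm{MRB}$, as well as its labeled $\mathrm{MRB}$ under any assignment of labels, equals $n-1$.
   Context: A tabletop rearrangement instance consists of $n$ objects (generalized cylinders of equal height; only planar footprints matter) in a bounded planar workspace, a feasible start arrangement and a feasible goal arrangement of poses in $SE(2)$; an arrangement is feasible if no two placed footprints overlap (have intersecting interiors). In the labeled setting each object $o_i$ must end at its own goal pose $x_i^g$; in the unlabeled setting objects are congruent and interchangeable and must end occupying all goal poses. A plan with external buffers is a sequence of pick-and-place operations in which each object is picked from its start pose exactly once and either placed directly at a goal pose (its own goal in the labeled setting, any unoccupied goal pose in the unlabeled setting), or placed into an external buffer (outside the workspace, unlimited capacity) and later moved from the buffer to such a goal pose; an object may be placed at a goal pose only if it does not overlap any object currently in the workspace; at the end every object is at a goal pose as required. The number of running buffers at a moment is the number of objects stored in buffers; $\mathrm{MRB}$ is the minimum over plans of the maximum number of running buffers during the plan. *)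

theory Defs
  imports "HOL-Analysis.Analysis"
begin

(* The plane is modelled as the complex numbers.  A pose in SE(2) is a pair
   (theta, t): rotation by angle theta followed by translation by t. *)
type_synonym pose = "real \<times> complex"

definition rigid :: "pose \<Rightarrow> complex \<Rightarrow> complex" where
  "rigid p z = cis (fst p) * z + snd p"

definition place :: "pose \<Rightarrow> complex set \<Rightarrow> complex set" where
  "place p S = rigid p ` S"

definition feasible_arr :: "nat \<Rightarrow> complex set \<Rightarrow> (nat \<Rightarrow> complex set) \<Rightarrow> bool" where
  "feasible_arr n W A \<longleftrightarrow>
     (\<forall>i<n. A i \<subseteq> W) \<and>
     (\<forall>i<n. \<forall>j<n. i \<noteq> j \<longrightarrow> interior (A i) \<inter> interior (A j) = {})"

definition labeled_instance ::
  "nat \<Rightarrow> complex set \<Rightarrow> (nat \<Rightarrow> complex set) \<Rightarrow> (nat \<Rightarrow> pose) \<Rightarrow> (nat \<Rightarrow> pose) \<Rightarrow> bool" where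
  "labeled_instance n W F ps pg \<longleftrightarrow>
     bounded W \<and> (\<forall>i<n. compact (F i) \<and> F i \<noteq> {}) \<and>
     feasible_arr n W (\<lambda>i. place (ps i) (F i)) \<and>
     feasible_arr n W (\<lambda>i. place (pg i) (F i))"

definition unlabeled_instance ::
  "nat \<Rightarrow> complex set \<Rightarrow> complex set \<Rightarrow> (nat \<Rightarrow> pose) \<Rightarrow> (nat \<Rightarrow> pose) \<Rightarrow> bool" where
  "unlabeled_instance n W S ps pg \<longleftrightarrow> labeled_instance n W (\<lambda>_. S) ps pg"

datatype loc = AtStart | InBuffer | AtGoal nat

(* region of the workspace occupied by object i in state st;
   SA i = placed start footprint of i, GA i g = footprint of i placed at goal pose g *)
definition occupied ::
  "(nat \<Rightarrow> complex set) \<Rightarrow> (nat \<Rightarrow> nat \<Rightarrow> complex set) \<Rightarrow> (nat \<Rightarrow> loc) \<Rightarrow> nat \<Rightarrow> complex set" where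
  "occupied SA GA st i = (case st i of AtStart \<Rightarrow> SA i | InBuffer \<Rightarrow> {} | AtGoal g \<Rightarrow> GA i g)"

(* one pick-and-place operation; allowed i g: object i may end at goal pose g *)
definition plan_step ::
  "nat \<Rightarrow> (nat \<Rightarrow> complex set) \<Rightarrow> (nat \<Rightarrow> nat \<Rightarrow> complex set) \<Rightarrow> (nat \<Rightarrow> nat \<Rightarrow> bool)
   \<Rightarrow> (nat \<Rightarrow> loc) \<Rightarrow> (nat \<Rightarrow> loc) \<Rightarrow> bool" where
  "plan_step n SA GA allowed st st' \<longleftrightarrow>
     (\<exists>i<n. (\<forall>j. j \<noteq> i \<longrightarrow> st' j = st j) \<and>
       ((st i = AtStart \<and> st' i = InBuffer) \<or>
        (\<exists>g<n. (st i = AtStart \<or> st i = InBuffer) \<and> st' i = AtGoal g \<and> allowed i g \<and>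
           (\<forall>j<n. j \<noteq> i \<longrightarrow> st j \<noteq> AtGoal g) \<and>
           (\<forall>j<n. j \<noteq> i \<longrightarrow> interior (occupied SA GA st j) \<inter> interior (GA i g) = {}))))"

(* a plan, given as the list of successive states *)
definition valid_plan ::
  "nat \<Rightarrow> (nat \<Rightarrow> complex set) \<Rightarrow> (nat \<Rightarrow> nat \<Rightarrow> complex set) \<Rightarrow> (nat \<Rightarrow> nat \<Rightarrow> bool)
   \<Rightarrow> (nat \<Rightarrow> loc) list \<Rightarrow> bool" where
  "valid_plan n SA GA allowed sts \<longleftrightarrow>
     sts \<noteq> [] \<and> hd sts = (\<lambda>_. AtStart) \<and>
     (\<forall>k. Suc k < length sts \<longrightarrow> plan_step n SA GA allowed (sts ! k) (sts ! Suc k)) \<and>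
     (\<forall>i<n. \<exists>g. last sts i = AtGoal g)"

definition running_buffers :: "nat \<Rightarrow> (nat \<Rightarrow> loc) \<Rightarrow> nat" where
  "running_buffers n st = card {i. i < n \<and> st i = InBuffer}"

definition MRB_gen ::
  "nat \<Rightarrow> (nat \<Rightarrow> complex set) \<Rightarrow> (nat \<Rightarrow> nat \<Rightarrow> complex set) \<Rightarrow> (nat \<Rightarrow> nat \<Rightarrow> bool) \<Rightarrow> nat" where
  "MRB_gen n SA GA allowed =
     (LEAST k. \<exists>sts. valid_plan n SA GA allowed sts \<and>
                     (\<forall>st\<in>set sts. running_buffers n st \<le> k))"

definition MRB_labeled :: "nat \<Rightarrow> (nat \<Rightarrow> complex set) \<Rightarrow> (nat \<Rightarrow> pose) \<Rightarrow> (nat \<Rightarrow> pose) \<Rightarrow> nat" where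
  "MRB_labeled n F ps pg =
     MRB_gen n (\<lambda>i. place (ps i) (F i)) (\<lambda>i g. place (pg i) (F i)) (\<lambda>i g. g = i)"

definition MRB_unlabeled :: "nat \<Rightarrow> complex set \<Rightarrow> (nat \<Rightarrow> pose) \<Rightarrow> (nat \<Rightarrow> pose) \<Rightarrow> nat" where
  "MRB_unlabeled n S ps pg =
     MRB_gen n (\<lambda>i. place (ps i) S) (\<lambda>i g. place (pg g) S) (\<lambda>i g. True)"

definition rectangle :: "real \<Rightarrow> real \<Rightarrow> complex set" where
  "rectangle a b = {z. \<bar>Re z\<bar> \<le> a \<and> \<bar>Im z\<bar> \<le> b}"

end

theory Submission
  imports Defs
begin

lemma rect_cbox: "rectangle a b = cbox (Complex (-a) (-b)) (Complex a b)"
  unfolding rectangle_def by (auto simp: in_cbox_complex_iff abs_le_iff)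

lemma rect_props:
  assumes "0 \<le> a" "0 \<le> b"
  shows "compact (rectangle a b)" "convex (rectangle a b)" "rectangle a b \<noteq> {}"
proof -
  show "compact (rectangle a b)" unfolding rect_cbox by (rule compact_cbox)
  show "convex (rectangle a b)" unfolding rect_cbox by (rule convex_box)
  have "0 \<in> rectangle a b" using assms by (simp add: rectangle_def)
  then show "rectangle a b \<noteq> {}" by blast
qed

lemma place_H:
  "place (0, Complex 0 c) (rectangle a 1) = {z. \<bar>Re z\<bar> \<le> a \<and> \<bar>Im z - c\<bar> \<le> 1}"
proof (rule set_eqI)
  fix z
  show "z \<in> place (0, Complex 0 c) (rectangle a 1) \<longleftrightarrow> z \<in> {z. \<bar>Re z\<bar> \<le> a \<and> \<bar>Im z - c\<bar> \<le> 1}"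
  proof
    assume "z \<in> place (0, Complex 0 c) (rectangle a 1)"
    then obtain w where "w \<in> rectangle a 1" "z = w + Complex 0 c"
      by (auto simp: place_def rigid_def)
    then show "z \<in> {z. \<bar>Re z\<bar> \<le> a \<and> \<bar>Im z - c\<bar> \<le> 1}" by (auto simp: rectangle_def)
  next
    assume h: "z \<in> {z. \<bar>Re z\<bar> \<le> a \<and> \<bar>Im z - c\<bar> \<le> 1}"
    have "z = rigid (0, Complex 0 c) (z - Complex 0 c)" by (simp add: rigid_def)
    moreover have "z - Complex 0 c \<in> rectangle a 1" using h by (simp add: rectangle_def)
    ultimately show "z \<in> place (0, Complex 0 c) (rectangle a 1)"
      unfolding place_def by blast
  qed
qed

lemma place_V:
  "place (pi/2, Complex c 0) (rectangle a 1) = {z. \<bar>Re z - c\<bar> \<le> 1 \<and> \<bar>Im z\<bar> \<le> a}"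
proof (rule set_eqI)
  fix z
  show "z \<in> place (pi/2, Complex c 0) (rectangle a 1) \<longleftrightarrow> z \<in> {z. \<bar>Re z - c\<bar> \<le> 1 \<and> \<bar>Im z\<bar> \<le> a}"
  proof
    assume "z \<in> place (pi/2, Complex c 0) (rectangle a 1)"
    then obtain w where "w \<in> rectangle a 1" "z = \<i> * w + Complex c 0"
      by (auto simp: place_def rigid_def)
    then show "z \<in> {z. \<bar>Re z - c\<bar> \<le> 1 \<and> \<bar>Im z\<bar> \<le> a}" by (auto simp: rectangle_def)
  next
    assume h: "z \<in> {z. \<bar>Re z - c\<bar> \<le> 1 \<and> \<bar>Im z\<bar> \<le> a}"
    have "z = rigid (pi/2, Complex c 0) (- \<i> * (z - Complex c 0))" by (simp add: rigid_def)
    moreover have "- \<i> * (z - Complex c 0) \<in> rectangle a 1" using h by (simp add: rectangle_def abs_minus_commute)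
    ultimately show "z \<in> place (pi/2, Complex c 0) (rectangle a 1)"
      unfolding place_def by blast
  qed
qed


definition upl :: "nat \<Rightarrow> (nat \<Rightarrow> nat) \<Rightarrow> nat \<Rightarrow> nat \<Rightarrow> loc" where
  "upl n \<tau> k j = (if j < n then (if k < n then (if 1 \<le> j \<and> j \<le> k then InBuffer else AtStart)
       else (if j \<le> k - n then AtGoal (\<tau> j) else InBuffer)) else AtStart)"

lemma upl_rb: "running_buffers n (upl n \<tau> k) \<le> n - 1"
proof -
  have "{i. i < n \<and> upl n \<tau> k i = InBuffer} \<subseteq> {1..<n}"
    by (auto simp: upl_def split: if_splits)
  then have "card {i. i < n \<and> upl n \<tau> k i = InBuffer} \<le> card {1..<n}"
    by (intro card_mono) auto
  then show ?thesis by (simp add: running_buffers_def)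
qed

lemma upper_plan:
  assumes n: "1 \<le> n"
    and al: "\<And>i. i < n \<Longrightarrow> allowed i (\<tau> i)"
    and tl: "\<And>i. i < n \<Longrightarrow> \<tau> i < n"
    and ti: "\<And>i j. i < n \<Longrightarrow> j < n \<Longrightarrow> i \<noteq> j \<Longrightarrow> \<tau> i \<noteq> \<tau> j"
    and dj: "\<And>i j. i < n \<Longrightarrow> j < n \<Longrightarrow> i \<noteq> j \<Longrightarrow>
              interior (GA i (\<tau> i)) \<inter> interior (GA j (\<tau> j)) = {}"
  shows "\<exists>sts. valid_plan n SA GA allowed sts \<and> (\<forall>st\<in>set sts. running_buffers n st \<le> n - 1)"
proof (intro exI conjI)
  let ?sts = "map (upl n \<tau>) [0..<2*n]"
  show "\<forall>st\<in>set ?sts. running_buffers n st \<le> n - 1" using upl_rb by auto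
  have step: "plan_step n SA GA allowed (upl n \<tau> k) (upl n \<tau> (Suc k))" if k: "Suc k < 2*n" for k
  proof (cases "Suc k < n")
    case True
    show ?thesis unfolding plan_step_def
      apply (rule exI[of _ "Suc k"])
      using True by (auto simp: upl_def)
  next
    case False
    show ?thesis
    proof (cases "Suc k = n")
      case True
      show ?thesis unfolding plan_step_def
        apply (rule exI[of _ 0])
        using True n al tl by (auto simp: upl_def occupied_def intro!: exI[of _ "\<tau> 0"])
    next
      case F2: False
      define m where "m = Suc k - n"
      have m: "m < n" "k - n = m - 1" "Suc k - n = m" "1 \<le> m" using False F2 k by (auto simp: m_def)
      show ?thesis unfolding plan_step_def
      proof (rule exI[of _ m], intro conjI)
        show "m < n" by fact
        show "\<forall>j. j \<noteq> m \<longrightarrow> upl n \<tau> (Suc k) j = upl n \<tau> k j"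
          using m False F2 by (auto simp: upl_def)
        show "upl n \<tau> k m = AtStart \<and> upl n \<tau> (Suc k) m = InBuffer \<or>
          (\<exists>g<n. (upl n \<tau> k m = AtStart \<or> upl n \<tau> k m = InBuffer) \<and> upl n \<tau> (Suc k) m = AtGoal g \<and>
            allowed m g \<and> (\<forall>j<n. j \<noteq> m \<longrightarrow> upl n \<tau> k j \<noteq> AtGoal g) \<and>
            (\<forall>j<n. j \<noteq> m \<longrightarrow> interior (occupied SA GA (upl n \<tau> k) j) \<inter> interior (GA m g) = {}))"
        proof (rule disjI2, rule exI[of _ "\<tau> m"], intro conjI)
          show "\<tau> m < n" using tl m by simp
          show "upl n \<tau> k m = AtStart \<or> upl n \<tau> k m = InBuffer"
            using m False F2 by (auto simp: upl_def)
          show "upl n \<tau> (Suc k) m = AtGoal (\<tau> m)"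
            using m False F2 by (auto simp: upl_def)
          show "allowed m (\<tau> m)" using al m by simp
          show "\<forall>j<n. j \<noteq> m \<longrightarrow> upl n \<tau> k j \<noteq> AtGoal (\<tau> m)"
            using m False F2 ti by (auto simp: upl_def)
          show "\<forall>j<n. j \<noteq> m \<longrightarrow> interior (occupied SA GA (upl n \<tau> k) j) \<inter> interior (GA m (\<tau> m)) = {}"
          proof (intro allI impI)
            fix j assume j: "j < n" "j \<noteq> m"
            show "interior (occupied SA GA (upl n \<tau> k) j) \<inter> interior (GA m (\<tau> m)) = {}"
            proof (cases "j \<le> m - 1")
              case True
              then show ?thesis using j m False F2 dj[of j m] by (auto simp: upl_def occupied_def)
            next
              case False
              then show ?thesis using j m F2 \<open>\<not> Suc k < n\<close> by (auto simp: upl_def occupied_def)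
            qed
          qed
        qed
      qed
    qed
  qed
  show "valid_plan n SA GA allowed ?sts"
    unfolding valid_plan_def
  proof (intro conjI allI impI)
    show "?sts \<noteq> []" using n by simp
    show "hd ?sts = (\<lambda>_. AtStart)" using n by (auto simp: hd_map upl_def)
    fix k assume "Suc k < length ?sts"
    then show "plan_step n SA GA allowed (?sts ! k) (?sts ! Suc k)" using step by simp
  next
    fix i assume "i < n"
    have "last ?sts = upl n \<tau> (2*n - 1)" using n by (simp add: last_map)
    then show "\<exists>g. last ?sts i = AtGoal g" using \<open>i < n\<close> n by (auto simp: upl_def)
  qed
qed


lemma lower_plan:
  assumes n: "1 \<le> n"
    and ov: "\<And>i j g. i < n \<Longrightarrow> j < n \<Longrightarrow> g < n \<Longrightarrow> j \<noteq> i \<Longrightarrow> allowed i g \<Longrightarrow>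
              interior (SA j) \<inter> interior (GA i g) \<noteq> {}"
    and vp: "valid_plan n SA GA allowed sts"
  shows "\<exists>st\<in>set sts. n - 1 \<le> running_buffers n st"
proof -
  define P where "P k \<longleftrightarrow> k < length sts \<and> (\<exists>i<n. \<exists>g. (sts ! k) i = AtGoal g)" for k
  have ne: "sts \<noteq> []" and hd: "hd sts = (\<lambda>_. AtStart)"
    and steps: "\<And>k. Suc k < length sts \<Longrightarrow> plan_step n SA GA allowed (sts ! k) (sts ! Suc k)"
    and lst: "\<And>i. i < n \<Longrightarrow> \<exists>g. last sts i = AtGoal g"
    using vp by (auto simp: valid_plan_def)
  have "P (length sts - 1)"
    using lst[of 0] n ne unfolding P_def by (metis One_nat_def diff_less last_conv_nth length_greater_0_conv less_numeral_extra(1) less_le_trans)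
  then have PL: "P (LEAST k. P k)" by (rule LeastI)
  define k0 where "k0 = (LEAST k. P k)"
  have s0: "sts ! 0 = (\<lambda>_. AtStart)" using hd ne by (simp add: hd_conv_nth)
  have "k0 \<noteq> 0"
  proof
    assume "k0 = 0"
    then have "P 0" using PL k0_def by simp
    then show False using s0 by (auto simp: P_def)
  qed
  then obtain k where k: "k0 = Suc k" by (cases k0) auto
  have Pk0: "P (Suc k)" using PL k k0_def by simp
  have nPk: "\<not> P k" using not_less_Least[of k P] k k0_def by simp
  have kl: "Suc k < length sts" using Pk0 by (simp add: P_def)
  then have kl': "k < length sts" by simp
  have noG: "\<And>j g. j < n \<Longrightarrow> (sts ! k) j \<noteq> AtGoal g" using nPk kl' by (auto simp: P_def)
  from steps[OF kl] obtain i where i: "i < n" "\<forall>j. j \<noteq> i \<longrightarrow> (sts ! Suc k) j = (sts ! k) j"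
    and c: "((sts ! k) i = AtStart \<and> (sts ! Suc k) i = InBuffer) \<or>
        (\<exists>g<n. ((sts ! k) i = AtStart \<or> (sts ! k) i = InBuffer) \<and> (sts ! Suc k) i = AtGoal g \<and> allowed i g \<and>
           (\<forall>j<n. j \<noteq> i \<longrightarrow> (sts ! k) j \<noteq> AtGoal g) \<and>
           (\<forall>j<n. j \<noteq> i \<longrightarrow> interior (occupied SA GA (sts ! k) j) \<inter> interior (GA i g) = {}))"
    unfolding plan_step_def by blast
  show ?thesis
  proof (cases "(sts ! k) i = AtStart \<and> (sts ! Suc k) i = InBuffer")
    case True
    then have False using Pk0 i noG by (auto simp: P_def) (metis loc.distinct(6))
    then show ?thesis ..
  next
    case False
    with c obtain g where g: "g < n" "allowed i g"
      and d: "\<forall>j<n. j \<noteq> i \<longrightarrow> interior (occupied SA GA (sts ! k) j) \<inter> interior (GA i g) = {}"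
      by blast
    have buf: "(sts ! k) j = InBuffer" if j: "j < n" "j \<noteq> i" for j
    proof (cases "(sts ! k) j")
      case AtStart
      have "interior (occupied SA GA (sts ! k) j) \<inter> interior (GA i g) = {}"
        using d j by blast
      then have "interior (SA j) \<inter> interior (GA i g) = {}"
        using AtStart by (simp add: occupied_def)
      then show ?thesis using ov[OF i(1) j(1) g(1) j(2) g(2)] by simp
    next
      case InBuffer then show ?thesis .
    next
      case (AtGoal x) then show ?thesis using noG j by blast
    qed
    have "{..<n} - {i} \<subseteq> {j. j < n \<and> (sts ! k) j = InBuffer}" using buf by auto
    then have "card ({..<n} - {i}) \<le> card {j. j < n \<and> (sts ! k) j = InBuffer}"
      by (intro card_mono) auto
    moreover have "card ({..<n} - {i}) = n - 1" using i by simp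
    ultimately have "n - 1 \<le> running_buffers n (sts ! k)" by (simp add: running_buffers_def)
    then show ?thesis using kl' by (auto intro: bexI[of _ "sts ! k"])
  qed
qed

lemma MRB_le:
  assumes "\<exists>sts. valid_plan n SA GA allowed sts \<and> (\<forall>st\<in>set sts. running_buffers n st \<le> m)"
  shows "MRB_gen n SA GA allowed \<le> m"
  unfolding MRB_gen_def by (rule Least_le) (rule assms)

lemma MRB_ge:
  assumes "\<exists>sts. valid_plan n SA GA allowed sts \<and> (\<forall>st\<in>set sts. running_buffers n st \<le> m)"
    and "\<And>sts. valid_plan n SA GA allowed sts \<Longrightarrow> \<exists>st\<in>set sts. r \<le> running_buffers n st"
  shows "r \<le> MRB_gen n SA GA allowed"
  unfolding MRB_gen_def
proof (rule LeastI2_ex)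
  show "\<exists>a sts. valid_plan n SA GA allowed sts \<and> (\<forall>st\<in>set sts. running_buffers n st \<le> a)"
    using assms(1) by blast
  fix x assume "\<exists>sts. valid_plan n SA GA allowed sts \<and> (\<forall>st\<in>set sts. running_buffers n st \<le> x)"
  then obtain sts where "valid_plan n SA GA allowed sts" "\<forall>st\<in>set sts. running_buffers n st \<le> x" by blast
  with assms(2) show "r \<le> x" by force
qed


definition HH :: "nat \<Rightarrow> nat \<Rightarrow> complex set" where
  "HH n k = {z. \<bar>Re z\<bar> \<le> 3 * real n \<and> \<bar>Im z - 3 * real k\<bar> \<le> 1}"
definition VV :: "nat \<Rightarrow> nat \<Rightarrow> complex set" where
  "VV n m = {z. \<bar>Re z - 3 * real m\<bar> \<le> 1 \<and> \<bar>Im z\<bar> \<le> 3 * real n}"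

lemma HH_disj: "k \<noteq> l \<Longrightarrow> HH n k \<inter> HH n l = {}"
proof (rule ccontr)
  assume "k \<noteq> l" "HH n k \<inter> HH n l \<noteq> {}"
  then obtain z where "\<bar>Im z - 3 * real k\<bar> \<le> 1" "\<bar>Im z - 3 * real l\<bar> \<le> 1" by (auto simp: HH_def)
  then have "\<bar>3 * real k - 3 * real l\<bar> \<le> 2" by linarith
  moreover have "1 \<le> \<bar>real k - real l\<bar>" using \<open>k \<noteq> l\<close> by (cases "k < l") auto
  ultimately show False by linarith
qed

lemma VV_disj: "k \<noteq> l \<Longrightarrow> VV n k \<inter> VV n l = {}"
proof (rule ccontr)
  assume "k \<noteq> l" "VV n k \<inter> VV n l \<noteq> {}"
  then obtain z where "\<bar>Re z - 3 * real k\<bar> \<le> 1" "\<bar>Re z - 3 * real l\<bar> \<le> 1" by (auto simp: VV_def)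
  then have "\<bar>3 * real k - 3 * real l\<bar> \<le> 2" by linarith
  moreover have "1 \<le> \<bar>real k - real l\<bar>" using \<open>k \<noteq> l\<close> by (cases "k < l") auto
  ultimately show False by linarith
qed

lemma HH_sub: "k < n \<Longrightarrow> HH n k \<subseteq> cball 0 (6 * real n)"
proof
  fix z assume k: "k < n" and z: "z \<in> HH n k"
  have "real k + 1 \<le> real n" using k by simp
  then have "\<bar>Re z\<bar> + \<bar>Im z\<bar> \<le> 6 * real n" using z by (auto simp: HH_def)
  then show "z \<in> cball 0 (6 * real n)" using cmod_le[of z] by auto
qed

lemma VV_sub: "k < n \<Longrightarrow> VV n k \<subseteq> cball 0 (6 * real n)"
proof
  fix z assume k: "k < n" and z: "z \<in> VV n k"
  have "real k + 1 \<le> real n" using k by simp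
  then have "\<bar>Re z\<bar> + \<bar>Im z\<bar> \<le> 6 * real n" using z by (auto simp: VV_def)
  then show "z \<in> cball 0 (6 * real n)" using cmod_le[of z] by auto
qed

lemma HV_ov: "k < n \<Longrightarrow> m < n \<Longrightarrow> interior (HH n k) \<inter> interior (VV n m) \<noteq> {}"
proof -
  assume k: "k < n" and m: "m < n"
  let ?c = "Complex (3 * real m) (3 * real k)"
  have kk: "real k + 1 \<le> real n" "real m + 1 \<le> real n" using k m by auto
  have bH: "ball ?c (1/2) \<subseteq> HH n k"
  proof
    fix z assume "z \<in> ball ?c (1/2)"
    then have d: "cmod (z - ?c) < 1/2" by (simp add: dist_norm norm_minus_commute)
    have "\<bar>Re (z - ?c)\<bar> < 1/2" "\<bar>Im (z - ?c)\<bar> < 1/2"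
      using abs_Re_le_cmod[of "z - ?c"] abs_Im_le_cmod[of "z - ?c"] d by linarith+
    then have a1: "\<bar>Re z - 3 * real m\<bar> < 1/2" and a2: "\<bar>Im z - 3 * real k\<bar> < 1/2" by simp_all
    have r: "Re z - 3 * real m < 1/2" "3 * real m - Re z < 1/2" "Im z - 3 * real k < 1/2" "3 * real k - Im z < 1/2"
      using a1 a2 unfolding abs_less_iff by linarith+
    have "0 \<le> real k" "0 \<le> real m" by simp_all
    then show "z \<in> HH n k" using kk r unfolding HH_def mem_Collect_eq abs_le_iff by linarith
  qed
  have bV: "ball ?c (1/2) \<subseteq> VV n m"
  proof
    fix z assume "z \<in> ball ?c (1/2)"
    then have d: "cmod (z - ?c) < 1/2" by (simp add: dist_norm norm_minus_commute)
    have "\<bar>Re (z - ?c)\<bar> < 1/2" "\<bar>Im (z - ?c)\<bar> < 1/2"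
      using abs_Re_le_cmod[of "z - ?c"] abs_Im_le_cmod[of "z - ?c"] d by linarith+
    then have a1: "\<bar>Re z - 3 * real m\<bar> < 1/2" and a2: "\<bar>Im z - 3 * real k\<bar> < 1/2" by simp_all
    have r: "Re z - 3 * real m < 1/2" "3 * real m - Re z < 1/2" "Im z - 3 * real k < 1/2" "3 * real k - Im z < 1/2"
      using a1 a2 unfolding abs_less_iff by linarith+
    have "0 \<le> real k" "0 \<le> real m" by simp_all
    then show "z \<in> VV n m" using kk r unfolding VV_def mem_Collect_eq abs_le_iff by linarith
  qed
  have "?c \<in> interior (HH n k)" "?c \<in> interior (VV n m)"
    using interior_maximal[OF bH open_ball] interior_maximal[OF bV open_ball] by auto
  then show ?thesis by blast
qed

lemma place_HH: "place (0, Complex 0 (3 * real k)) (rectangle (3 * real n) 1) = HH n k"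
  unfolding HH_def by (rule place_H)
lemma place_VV: "place (pi/2, Complex (3 * real m) 0) (rectangle (3 * real n) 1) = VV n m"
  unfolding VV_def by (rule place_V)

theorem proposition4:
  shows "(\<forall>n\<ge>1. \<forall>W F ps pg. labeled_instance n W F ps pg \<longrightarrow> MRB_labeled n F ps pg \<le> n - 1) \<and>
         (\<forall>n\<ge>1. \<forall>W S ps pg. unlabeled_instance n W S ps pg \<longrightarrow> MRB_unlabeled n S ps pg \<le> n - 1) \<and>
         (\<forall>n\<ge>1. \<exists>W S ps pg a b. 0 < a \<and> 0 < b \<and> S = rectangle a b \<and> convex S \<and>
              unlabeled_instance n W S ps pg \<and>
              MRB_unlabeled n S ps pg = n - 1 \<and>
              (\<forall>\<sigma>. \<sigma> permutes {..<n} \<longrightarrow> MRB_labeled n (\<lambda>_. S) ps (pg \<circ> \<sigma>) = n - 1))"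
proof (intro conjI allI impI)
  fix n :: nat and W F ps pg
  assume n: "1 \<le> n" and L: "labeled_instance n W F ps pg"
  show "MRB_labeled n F ps pg \<le> n - 1"
    unfolding MRB_labeled_def
    by (rule MRB_le, rule upper_plan[where \<tau> = id]) 
       (use n L in \<open>auto simp: labeled_instance_def feasible_arr_def\<close>)
next
  fix n :: nat and W S ps pg
  assume n: "1 \<le> n" and L: "unlabeled_instance n W S ps pg"
  show "MRB_unlabeled n S ps pg \<le> n - 1"
    unfolding MRB_unlabeled_def
    by (rule MRB_le, rule upper_plan[where \<tau> = id]) 
       (use n L in \<open>auto simp: unlabeled_instance_def labeled_instance_def feasible_arr_def\<close>)
next
  fix n :: nat
  assume n: "1 \<le> n"
  define S where "S = rectangle (3 * real n) 1"
  define ps where "ps = (\<lambda>k::nat. (0::real, Complex 0 (3 * real k)))"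
  define pg where "pg = (\<lambda>m::nat. (pi/2, Complex (3 * real m) 0))"
  have PS: "place (ps k) S = HH n k" for k unfolding ps_def S_def by (rule place_HH)
  have PG: "place (pg k) S = VV n k" for k unfolding pg_def S_def by (rule place_VV)
  have Sp: "compact S" "convex S" "S \<noteq> {}" unfolding S_def using rect_props[of "3 * real n" 1] by auto
  have UI: "unlabeled_instance n (cball 0 (6 * real n)) S ps pg"
    unfolding unlabeled_instance_def labeled_instance_def feasible_arr_def PS PG
  proof (intro conjI allI impI)
    fix i j :: nat assume "i < n" "j < n" "i \<noteq> j"
    show "interior (HH n i) \<inter> interior (HH n j) = {}"
      using HH_disj[OF \<open>i \<noteq> j\<close>, of n] interior_subset[of "HH n i"] interior_subset[of "HH n j"] by blast
    show "interior (VV n i) \<inter> interior (VV n j) = {}"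
      using VV_disj[OF \<open>i \<noteq> j\<close>, of n] interior_subset[of "VV n i"] interior_subset[of "VV n j"] by blast
  qed (use Sp HH_sub VV_sub in auto)
  have MU: "MRB_unlabeled n S ps pg = n - 1"
  proof (rule antisym)
    show "MRB_unlabeled n S ps pg \<le> n - 1"
      unfolding MRB_unlabeled_def
      by (rule MRB_le, rule upper_plan[where \<tau> = id]) 
         (use n UI in \<open>auto simp: unlabeled_instance_def labeled_instance_def feasible_arr_def\<close>)
    show "n - 1 \<le> MRB_unlabeled n S ps pg"
      unfolding MRB_unlabeled_def
    proof (rule MRB_ge)
      show "\<exists>sts. valid_plan n (\<lambda>i. place (ps i) S) (\<lambda>i g. place (pg g) S) (\<lambda>i g. True) sts \<and>
          (\<forall>st\<in>set sts. running_buffers n st \<le> n - 1)"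
        by (rule upper_plan[where \<tau> = id]) 
           (use n UI in \<open>auto simp: unlabeled_instance_def labeled_instance_def feasible_arr_def\<close>)
      fix sts assume "valid_plan n (\<lambda>i. place (ps i) S) (\<lambda>i g. place (pg g) S) (\<lambda>i g. True) sts"
      then show "\<exists>st\<in>set sts. n - 1 \<le> running_buffers n st"
        by (rule lower_plan[OF n, rotated]) (simp add: PS PG HV_ov)
    qed
  qed
  have MLb: "MRB_labeled n (\<lambda>_. S) ps (pg \<circ> \<sigma>) = n - 1" if \<sigma>: "\<sigma> permutes {..<n}" for \<sigma>
  proof -
    have sl: "\<sigma> i < n" if "i < n" for i using permutes_in_image[OF \<sigma>] that by simp
    have si: "\<sigma> i \<noteq> \<sigma> j" if "i \<noteq> j" for i j using permutes_inj[OF \<sigma>] that by (meson injD)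
    have ex: "\<exists>sts. valid_plan n (\<lambda>i. place (ps i) S) (\<lambda>i g. place ((pg \<circ> \<sigma>) i) S) (\<lambda>i g. g = i) sts \<and>
          (\<forall>st\<in>set sts. running_buffers n st \<le> n - 1)"
    proof (rule upper_plan[where \<tau> = id])
      fix i j assume "i < n" "j < n" "i \<noteq> j"
      then show "interior (place ((pg \<circ> \<sigma>) i) S) \<inter> interior (place ((pg \<circ> \<sigma>) j) S) = {}"
        using VV_disj[OF si[of i j], of n] interior_subset[of "VV n (\<sigma> i)"] interior_subset[of "VV n (\<sigma> j)"]
        by (auto simp: PG)
    qed (use n in auto)
    show ?thesis
    proof (rule antisym)
      show "MRB_labeled n (\<lambda>_. S) ps (pg \<circ> \<sigma>) \<le> n - 1"
        unfolding MRB_labeled_def by (rule MRB_le[OF ex])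
      show "n - 1 \<le> MRB_labeled n (\<lambda>_. S) ps (pg \<circ> \<sigma>)"
        unfolding MRB_labeled_def
      proof (rule MRB_ge[OF ex])
        fix sts assume "valid_plan n (\<lambda>i. place (ps i) S) (\<lambda>i g. place ((pg \<circ> \<sigma>) i) S) (\<lambda>i g. g = i) sts"
        then show "\<exists>st\<in>set sts. n - 1 \<le> running_buffers n st"
          by (rule lower_plan[OF n, rotated]) (simp add: PS PG HV_ov sl)
      qed
    qed
  qed
  show "\<exists>W S ps pg a b. 0 < a \<and> 0 < b \<and> S = rectangle a b \<and> convex S \<and>
              unlabeled_instance n W S ps pg \<and>
              MRB_unlabeled n S ps pg = n - 1 \<and>
              (\<forall>\<sigma>. \<sigma> permutes {..<n} \<longrightarrow> MRB_labeled n (\<lambda>_. S) ps (pg \<circ> \<sigma>) = n - 1)"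
    apply (rule exI[of _ "cball 0 (6 * real n)"], rule exI[of _ S], rule exI[of _ ps], rule exI[of _ pg],
           rule exI[of _ "3 * real n"], rule exI[of _ 1])
    using n Sp UI MU MLb by (auto simp: S_def)
qed

end
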